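(* Let $f:\mathbb{N}\to\mathbb{N}\cup\{\infty\}$ be any function, and let $\mathbf{P}_f$ be the set of integer partitions in which, for every $i$, the part $i$ appears at most $f(i)$ times. Then $\mathbf{P}_f$ is a distributive sublattice of the Young lattice; that is, $\mathbf{P}_f$ is closed under the partwise join and meet of the Young lattice.
   Context: $\mathbb{N}$ denotes the positive integers. The Young lattice is the set of all integer partitions (including the empty one) ordered by $\lambda\le\mu$ iff $\lambda_i\le\mu_i$ for all $i$ (parts beyond the length being $0$); its join and meet are given partwise by $(\lambda\vee\mu)_i=\max(\lambda_i,\mu_i)$ and $(\lambda\wedge\mu)_i=\min(\lambda_i,\mu_i)$. *)

theory Defs
  imports Main "HOL-Library.Extended_Nat"
begin

text \<open>An integer partition is represented by its sequence of parts
  p 0 \<ge> p 1 \<ge> ... (p j is the (j+1)-st part), weakly decreasing and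
  eventually 0. The empty partition is the constant 0 function.\<close>

definition is_partition :: "(nat \<Rightarrow> nat) \<Rightarrow> bool" where
  "is_partition p \<longleftrightarrow> antimono p \<and> (\<exists>n. \<forall>j\<ge>n. p j = 0)"

text \<open>Number of times the part i occurs in p (meaningful for i \<ge> 1).\<close>
definition multiplicity_part :: "(nat \<Rightarrow> nat) \<Rightarrow> nat \<Rightarrow> nat" where
  "multiplicity_part p i = card {j. p j = i}"

text \<open>P_f: partitions in which each part i \<ge> 1 appears at most f i times
  (f i = \<infinity> meaning no restriction). The value f 0 is irrelevant.\<close>
definition P_f :: "(nat \<Rightarrow> enat) \<Rightarrow> (nat \<Rightarrow> nat) set" where
  "P_f f = {p. is_partition p \<and> (\<forall>i\<ge>1. enat (multiplicity_part p i) \<le> f i)}"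

definition young_join :: "(nat \<Rightarrow> nat) \<Rightarrow> (nat \<Rightarrow> nat) \<Rightarrow> (nat \<Rightarrow> nat)" where
  "young_join p q = (\<lambda>j. max (p j) (q j))"

definition young_meet :: "(nat \<Rightarrow> nat) \<Rightarrow> (nat \<Rightarrow> nat) \<Rightarrow> (nat \<Rightarrow> nat)" where
  "young_meet p q = (\<lambda>j. min (p j) (q j))"

end

theory Submission
  imports Defs
begin

lemma fin_level:
  assumes "is_partition p" "i \<ge> 1"
  shows "finite {j. p j = i}"
proof -
  obtain n where n: "\<forall>j\<ge>n. p j = 0" using assms(1) unfolding is_partition_def by blast
  have "{j. p j = i} \<subseteq> {..<n}" using n assms(2) by (auto simp: not_less[symmetric])
  thus ?thesis using finite_subset by blast
qed

lemma mult_le: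
  assumes "p \<in> P_f f" "q \<in> P_f f" "i \<ge> 1"
    and sub: "{j. g j = i} \<subseteq> {j. p j = i} \<or> {j. g j = i} \<subseteq> {j. q j = i}"
  shows "enat (multiplicity_part g i) \<le> f i"
proof -
  have pp: "is_partition p" "is_partition q" using assms(1,2) by (auto simp: P_f_def)
  have mp: "enat (multiplicity_part p i) \<le> f i" "enat (multiplicity_part q i) \<le> f i"
    using assms(1,2,3) by (auto simp: P_f_def)
  from sub show ?thesis
  proof
    assume s: "{j. g j = i} \<subseteq> {j. p j = i}"
    have "card {j. g j = i} \<le> card {j. p j = i}" using card_mono[OF fin_level[OF pp(1) assms(3)] s] .
    thus ?thesis using mp(1) unfolding multiplicity_part_def by (meson enat_ord_simps(1) order_trans)
  next
    assume s: "{j. g j = i} \<subseteq> {j. q j = i}"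
    have "card {j. g j = i} \<le> card {j. q j = i}" using card_mono[OF fin_level[OF pp(2) assms(3)] s] .
    thus ?thesis using mp(2) unfolding multiplicity_part_def by (meson enat_ord_simps(1) order_trans)
  qed
qed

theorem mainTheorem4:
  fixes f :: "nat \<Rightarrow> enat"
  shows "\<forall>p\<in>P_f f. \<forall>q\<in>P_f f. young_join p q \<in> P_f f \<and> young_meet p q \<in> P_f f"
proof (intro ballI conjI)
  fix p q assume p: "p \<in> P_f f" and q: "q \<in> P_f f"
  have pp: "is_partition p" "is_partition q" using p q by (auto simp: P_f_def)
  have ap: "antimono p" "antimono q" using pp by (auto simp: is_partition_def)
  obtain n1 where n1: "\<forall>j\<ge>n1. p j = 0" using pp(1) unfolding is_partition_def by blast
  obtain n2 where n2: "\<forall>j\<ge>n2. q j = 0" using pp(2) unfolding is_partition_def by blast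
  have mp: "\<And>a b. a \<le> b \<Longrightarrow> p b \<le> p a" "\<And>a b. a \<le> b \<Longrightarrow> q b \<le> q a"
    using ap by (auto simp: antimono_def)
  show "young_join p q \<in> P_f f"
    unfolding P_f_def
  proof (intro CollectI conjI allI impI)
    show "is_partition (young_join p q)" unfolding is_partition_def young_join_def
    proof
      show "antimono (\<lambda>j. max (p j) (q j))" unfolding antimono_def
        using mp by (meson max.mono)
      show "\<exists>n. \<forall>j\<ge>n. max (p j) (q j) = 0"
        by (rule exI[of _ "max n1 n2"]) (simp add: n1 n2)
    qed
    fix i :: nat assume i: "1 \<le> i"
    show "enat (multiplicity_part (young_join p q) i) \<le> f i"
    proof (rule mult_le[OF p q i])
      show "{j. young_join p q j = i} \<subseteq> {j. p j = i} \<or> {j. young_join p q j = i} \<subseteq> {j. q j = i}"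
      proof (rule ccontr)
        assume "\<not> ?thesis"
        then obtain j1 j2 where a: "max (p j1) (q j1) = i" "p j1 \<noteq> i"
          and b: "max (p j2) (q j2) = i" "q j2 \<noteq> i" by (auto simp: young_join_def)
        have "q j1 = i" "p j1 < i" "p j2 = i" "q j2 < i" using a b by (auto simp: max_def split: if_splits)
        then show False using mp[of j1 j2] mp[of j2 j1] by (cases "j1 \<le> j2") auto
      qed
    qed
  qed
  show "young_meet p q \<in> P_f f"
    unfolding P_f_def
  proof (intro CollectI conjI allI impI)
    show "is_partition (young_meet p q)" unfolding is_partition_def young_meet_def
    proof
      show "antimono (\<lambda>j. min (p j) (q j))" unfolding antimono_def
        using mp by (meson min.mono)
      show "\<exists>n. \<forall>j\<ge>n. min (p j) (q j) = 0"
        by (rule exI[of _ n1]) (simp add: n1)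
    qed
    fix i :: nat assume i: "1 \<le> i"
    show "enat (multiplicity_part (young_meet p q) i) \<le> f i"
    proof (rule mult_le[OF p q i])
      show "{j. young_meet p q j = i} \<subseteq> {j. p j = i} \<or> {j. young_meet p q j = i} \<subseteq> {j. q j = i}"
      proof (rule ccontr)
        assume "\<not> ?thesis"
        then obtain j1 j2 where a: "min (p j1) (q j1) = i" "p j1 \<noteq> i"
          and b: "min (p j2) (q j2) = i" "q j2 \<noteq> i" by (auto simp: young_meet_def)
        have "q j1 = i" "p j1 > i" "p j2 = i" "q j2 > i" using a b by (auto simp: min_def split: if_splits)
        then show False using mp[of j1 j2] mp[of j2 j1] by (cases "j1 \<le> j2") auto
      qed
    qed
  qed
qed

end
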